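(* Every set $SQ$ of priority derivation steps of stack-queue type is specialisation independent: whenever $Ds_1,Ds_2\in SQ$ and $Ds_2$ is a lowering of $Ds_1$ by a p-goal $X$, then $Ds_2$ is a congruent lowering of $Ds_1$ by $X$. Consequently every complete set of stack-queue type is a specialisation independent scheduling rule.
   Context: A p-atom is a pair $a[p]$ of an atom $a$ and a rational priority $p$. A p-goal is a finite set of p-atoms with pairwise distinct priorities, regarded as a list ordered by increasing priority. Substitutions act on atoms and leave priorities unchanged. A clause is $h\leftarrow B$ with $h$ an atom and $B$ a p-goal. For p-goals with no common priority, $F+G=F\cup G$; $F|G$ denotes $F+G$ when all priorities of $F$ are smaller than those of $G$. A shifting $\underline{\pi}$ is a strictly increasing bijection $\mathbb{Q}\to\mathbb{Q}$ acting on priorities ($G\underline\pi$). Priority derivation step: for a p-goal $a|F$ ($a$ of least priority), clause $c=(h\leftarrow B)$, renaming $\xi$ with $var(a|F)\cap var(c\xi)=\emptyset$, idempotent relevant mgu $\theta$ of $a$ and $h\xi$, shifting $\underline{\pi}$ with $F$, $B\xi\underline{\pi}$ sharing no priority: $a|F\xrightarrow{c\xi,\theta}(F+B\xi\underline{\pi})\theta$. Lowering: for $c=(h\leftarrow B)$, a step $a\lambda\underline{\sigma}|(K\lambda\underline{\sigma}+X)\xrightarrow{c}(X+K\lambda\underline{\sigma}+B\xi''\underline{\theta}'')\alpha''$ is a lowering by $X$ of a step $a|K\xrightarrow{c}(K+B\xi'\underline{\theta}')\alpha'$ ($\lambda$ a substitution, $\underline\sigma$ a shifting); it is a congruent lowering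 by $X$ if some shifting $\underline{\rho}$ has $K\underline{\rho}=K\underline{\sigma}$ and $B\underline{\theta}'\underline{\rho}=B\underline{\theta}''$. Steps are (congruent) lowerings of each other if each is a (congruent) lowering of the other. A set $S$ of steps is complete if (i) whenever some step $G\xrightarrow{c}\cdot$ exists, some step $G\xrightarrow{c}\cdot$ lies in $S$, and (ii) $S$ contains every step that is a congruent lowering of each other with a step of $S$; deterministic if two steps of $S$ that are lowerings of each other are congruent lowerings of each other; specialisation independent as in the claim. A scheduling rule is a complete deterministic set; a specialisation independent scheduling rule is a complete specialisation independent set. Stack-queue type: a set $SQ$ of priority derivation steps is of stack-queue type if for every clause $c=(h\leftarrow B)$ there are p-goals $M_s,M_q$ with $B=M_s|M_q$ such that every step $a|K\xrightarrow{c\xi,\mu}R$ in $SQ$ satisfies $R=(M_s\xi\underline{\gamma}|K|M_q\xi\underline{\gamma})\mu$ for some shifting $\underline{\gamma}$. *)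

theory Defs
  imports Complex_Main
begin

datatype ('f, 'v) trm = Var 'v | Fn 'f "('f, 'v) trm list"

type_synonym ('f, 'v) subst = "'v \<Rightarrow> ('f, 'v) trm"

fun subst_trm :: "('f, 'v) trm \<Rightarrow> ('f, 'v) subst \<Rightarrow> ('f, 'v) trm" where
  "subst_trm (Var x) \<sigma> = \<sigma> x"
| "subst_trm (Fn f ts) \<sigma> = Fn f (map (\<lambda>t. subst_trm t \<sigma>) ts)"

fun vars_trm :: "('f, 'v) trm \<Rightarrow> 'v set" where
  "vars_trm (Var x) = {x}"
| "vars_trm (Fn f ts) = \<Union> (set (map vars_trm ts))"

definition subst_comp :: "('f, 'v) subst \<Rightarrow> ('f, 'v) subst \<Rightarrow> ('f, 'v) subst" where
  "subst_comp \<sigma> \<tau> = (\<lambda>x. subst_trm (\<sigma> x) \<tau>)"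

datatype ('p, 'f, 'v) atom = Atom 'p "('f, 'v) trm list"

fun subst_atom :: "('p, 'f, 'v) atom \<Rightarrow> ('f, 'v) subst \<Rightarrow> ('p, 'f, 'v) atom" where
  "subst_atom (Atom P ts) \<sigma> = Atom P (map (\<lambda>t. subst_trm t \<sigma>) ts)"

fun vars_atom :: "('p, 'f, 'v) atom \<Rightarrow> 'v set" where
  "vars_atom (Atom P ts) = \<Union> (set (map vars_trm ts))"

definition subst_dom :: "('f, 'v) subst \<Rightarrow> 'v set" where
  "subst_dom \<theta> = {x. \<theta> x \<noteq> Var x}"

definition subst_range_vars :: "('f, 'v) subst \<Rightarrow> 'v set" where
  "subst_range_vars \<theta> = (\<Union>x\<in>subst_dom \<theta>. vars_trm (\<theta> x))"

definition renaming :: "('f, 'v) subst \<Rightarrow> bool" where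
  "renaming \<xi> \<longleftrightarrow> (\<exists>f. bij f \<and> \<xi> = (\<lambda>x. Var (f x)))"

definition unifier :: "('f, 'v) subst \<Rightarrow> ('p, 'f, 'v) atom \<Rightarrow> ('p, 'f, 'v) atom \<Rightarrow> bool" where
  "unifier \<theta> A A' \<longleftrightarrow> subst_atom A \<theta> = subst_atom A' \<theta>"

definition mgu :: "('f, 'v) subst \<Rightarrow> ('p, 'f, 'v) atom \<Rightarrow> ('p, 'f, 'v) atom \<Rightarrow> bool" where
  "mgu \<theta> A A' \<longleftrightarrow> unifier \<theta> A A' \<and> (\<forall>\<tau>. unifier \<tau> A A' \<longrightarrow> (\<exists>\<delta>. \<tau> = subst_comp \<theta> \<delta>))"

definition idem_relevant_mgu :: "('f, 'v) subst \<Rightarrow> ('p, 'f, 'v) atom \<Rightarrow> ('p, 'f, 'v) atom \<Rightarrow> bool" where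
  "idem_relevant_mgu \<theta> A A' \<longleftrightarrow> mgu \<theta> A A' \<and> subst_comp \<theta> \<theta> = \<theta>
     \<and> subst_dom \<theta> \<union> subst_range_vars \<theta> \<subseteq> vars_atom A \<union> vars_atom A'"

type_synonym ('p, 'f, 'v) patom = "('p, 'f, 'v) atom \<times> rat"
type_synonym ('p, 'f, 'v) pgoal = "('p, 'f, 'v) patom set"
type_synonym ('p, 'f, 'v) clause = "('p, 'f, 'v) atom \<times> ('p, 'f, 'v) pgoal"

definition prios :: "('p, 'f, 'v) pgoal \<Rightarrow> rat set" where
  "prios G = snd ` G"

definition pgoal :: "('p, 'f, 'v) pgoal \<Rightarrow> bool" where
  "pgoal G \<longleftrightarrow> finite G \<and> inj_on snd G"

text \<open>F and G share no priority (the side condition of F + G = F \<union> G).\<close>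
definition no_common :: "('p, 'f, 'v) pgoal \<Rightarrow> ('p, 'f, 'v) pgoal \<Rightarrow> bool" where
  "no_common F G \<longleftrightarrow> prios F \<inter> prios G = {}"

text \<open>All priorities of F are smaller than those of G (side condition of F|G = F \<union> G).\<close>
definition before :: "('p, 'f, 'v) pgoal \<Rightarrow> ('p, 'f, 'v) pgoal \<Rightarrow> bool" where
  "before F G \<longleftrightarrow> (\<forall>p\<in>prios F. \<forall>q\<in>prios G. p < q)"

definition subst_pg :: "('p, 'f, 'v) pgoal \<Rightarrow> ('f, 'v) subst \<Rightarrow> ('p, 'f, 'v) pgoal" where
  "subst_pg G \<sigma> = (\<lambda>(A, p). (subst_atom A \<sigma>, p)) ` G"

definition shifting :: "(rat \<Rightarrow> rat) \<Rightarrow> bool" where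
  "shifting \<pi> \<longleftrightarrow> strict_mono \<pi> \<and> bij \<pi>"

definition shift_pg :: "('p, 'f, 'v) pgoal \<Rightarrow> (rat \<Rightarrow> rat) \<Rightarrow> ('p, 'f, 'v) pgoal" where
  "shift_pg G \<pi> = (\<lambda>(A, p). (A, \<pi> p)) ` G"

definition vars_pg :: "('p, 'f, 'v) pgoal \<Rightarrow> 'v set" where
  "vars_pg G = (\<Union>(A, p)\<in>G. vars_atom A)"

definition subst_clause :: "('p, 'f, 'v) clause \<Rightarrow> ('f, 'v) subst \<Rightarrow> ('p, 'f, 'v) clause" where
  "subst_clause c \<xi> = (subst_atom (fst c) \<xi>, subst_pg (snd c) \<xi>)"

definition vars_clause :: "('p, 'f, 'v) clause \<Rightarrow> 'v set" where
  "vars_clause c = vars_atom (fst c) \<union> vars_pg (snd c)"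

text \<open>A step  G --(c\<xi>,\<theta>)--> R  records the goal, the (unrenamed) clause c, the renaming \<xi>,
  the shifting \<pi> used, the mgu \<theta> and the resulting p-goal.\<close>
record ('p, 'f, 'v) pstep =
  st_goal   :: "('p, 'f, 'v) pgoal"
  st_clause :: "('p, 'f, 'v) clause"
  st_ren    :: "('f, 'v) subst"
  st_shift  :: "rat \<Rightarrow> rat"
  st_mgu    :: "('f, 'v) subst"
  st_res    :: "('p, 'f, 'v) pgoal"

definition is_step :: "('p, 'f, 'v) pstep \<Rightarrow> bool" where
  "is_step D \<longleftrightarrow>
     (\<exists>a F. st_goal D = insert a F \<and> pgoal F \<and> before {a} F
        \<and> pgoal (snd (st_clause D))
        \<and> renaming (st_ren D)
        \<and> vars_pg (st_goal D) \<inter> vars_clause (subst_clause (st_clause D) (st_ren D)) = {}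
        \<and> idem_relevant_mgu (st_mgu D) (fst a) (subst_atom (fst (st_clause D)) (st_ren D))
        \<and> shifting (st_shift D)
        \<and> no_common F (shift_pg (subst_pg (snd (st_clause D)) (st_ren D)) (st_shift D))
        \<and> st_res D = subst_pg (F \<union> shift_pg (subst_pg (snd (st_clause D)) (st_ren D)) (st_shift D))
                        (st_mgu D))"

text \<open>Here \<xi>', \<theta>', \<alpha>' (resp. \<xi>'', \<theta>'', \<alpha>'') are the renaming, shifting and mgu of D1 (resp. D2).\<close>
definition lowering_wit ::
  "('p, 'f, 'v) pstep \<Rightarrow> ('p, 'f, 'v) pstep \<Rightarrow> ('p, 'f, 'v) pgoal
   \<Rightarrow> ('p, 'f, 'v) patom \<Rightarrow> ('p, 'f, 'v) pgoal \<Rightarrow> ('f, 'v) subst \<Rightarrow> (rat \<Rightarrow> rat) \<Rightarrow> bool" where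
  "lowering_wit D1 D2 X a K lam \<sigma> \<longleftrightarrow>
     (let c = st_clause D1; B = snd c;
          a' = (subst_atom (fst a) lam, \<sigma> (snd a));
          K' = shift_pg (subst_pg K lam) \<sigma>;
          B1 = shift_pg (subst_pg B (st_ren D1)) (st_shift D1);
          B2 = shift_pg (subst_pg B (st_ren D2)) (st_shift D2)
      in st_clause D2 = c \<and> pgoal X \<and> pgoal K \<and> shifting \<sigma>
         \<and> st_goal D1 = insert a K \<and> before {a} K
         \<and> no_common K' X \<and> before {a'} (K' \<union> X) \<and> st_goal D2 = insert a' (K' \<union> X)
         \<and> no_common K B1 \<and> st_res D1 = subst_pg (K \<union> B1) (st_mgu D1)
         \<and> no_common (X \<union> K') B2 \<and> st_res D2 = subst_pg (X \<union> K' \<union> B2) (st_mgu D2))"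

definition lowering :: "('p, 'f, 'v) pstep \<Rightarrow> ('p, 'f, 'v) pstep \<Rightarrow> ('p, 'f, 'v) pgoal \<Rightarrow> bool" where
  "lowering D1 D2 X \<longleftrightarrow> (\<exists>a K lam \<sigma>. lowering_wit D1 D2 X a K lam \<sigma>)"

definition cong_lowering :: "('p, 'f, 'v) pstep \<Rightarrow> ('p, 'f, 'v) pstep \<Rightarrow> ('p, 'f, 'v) pgoal \<Rightarrow> bool" where
  "cong_lowering D1 D2 X \<longleftrightarrow>
     (\<exists>a K lam \<sigma>. lowering_wit D1 D2 X a K lam \<sigma>
        \<and> (\<exists>\<rho>. shifting \<rho> \<and> shift_pg K \<rho> = shift_pg K \<sigma>
               \<and> shift_pg (shift_pg (snd (st_clause D1)) (st_shift D1)) \<rho>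
                   = shift_pg (snd (st_clause D1)) (st_shift D2)))"

definition mutual_lowering :: "('p, 'f, 'v) pstep \<Rightarrow> ('p, 'f, 'v) pstep \<Rightarrow> bool" where
  "mutual_lowering D1 D2 \<longleftrightarrow> (\<exists>X. lowering D1 D2 X) \<and> (\<exists>Y. lowering D2 D1 Y)"

definition mutual_cong_lowering :: "('p, 'f, 'v) pstep \<Rightarrow> ('p, 'f, 'v) pstep \<Rightarrow> bool" where
  "mutual_cong_lowering D1 D2 \<longleftrightarrow> (\<exists>X. cong_lowering D1 D2 X) \<and> (\<exists>Y. cong_lowering D2 D1 Y)"

definition complete :: "('p, 'f, 'v) pstep set \<Rightarrow> bool" where
  "complete S \<longleftrightarrow>
     (\<forall>G c. (\<exists>D. is_step D \<and> st_goal D = G \<and> st_clause D = c)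
              \<longrightarrow> (\<exists>D\<in>S. st_goal D = G \<and> st_clause D = c))
   \<and> (\<forall>D'\<in>S. \<forall>D. is_step D \<and> mutual_cong_lowering D D' \<longrightarrow> D \<in> S)"

definition deterministic :: "('p, 'f, 'v) pstep set \<Rightarrow> bool" where
  "deterministic S \<longleftrightarrow> (\<forall>D1\<in>S. \<forall>D2\<in>S. mutual_lowering D1 D2 \<longrightarrow> mutual_cong_lowering D1 D2)"

definition spec_independent :: "('p, 'f, 'v) pstep set \<Rightarrow> bool" where
  "spec_independent S \<longleftrightarrow>
     (\<forall>D1\<in>S. \<forall>D2\<in>S. \<forall>X. lowering D1 D2 X \<longrightarrow> cong_lowering D1 D2 X)"

definition scheduling_rule :: "('p, 'f, 'v) pstep set \<Rightarrow> bool" where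
  "scheduling_rule S \<longleftrightarrow> complete S \<and> deterministic S"

definition spec_indep_scheduling_rule :: "('p, 'f, 'v) pstep set \<Rightarrow> bool" where
  "spec_indep_scheduling_rule S \<longleftrightarrow> complete S \<and> spec_independent S"

definition stack_queue_type :: "('p, 'f, 'v) pstep set \<Rightarrow> bool" where
  "stack_queue_type SQ \<longleftrightarrow>
     (\<forall>c :: ('p, 'f, 'v) clause. pgoal (snd c) \<longrightarrow>
        (\<exists>Ms Mq. pgoal Ms \<and> pgoal Mq \<and> before Ms Mq \<and> snd c = Ms \<union> Mq
          \<and> (\<forall>D\<in>SQ. \<forall>a K. st_clause D = c \<and> st_goal D = insert a K \<and> before {a} K \<longrightarrow>
               (\<exists>\<gamma>. shifting \<gamma>
                  \<and> before (shift_pg (subst_pg Ms (st_ren D)) \<gamma>) K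
                  \<and> before K (shift_pg (subst_pg Mq (st_ren D)) \<gamma>)
                  \<and> before (shift_pg (subst_pg Ms (st_ren D)) \<gamma>) (shift_pg (subst_pg Mq (st_ren D)) \<gamma>)
                  \<and> st_res D = subst_pg (shift_pg (subst_pg Ms (st_ren D)) \<gamma> \<union> K
                                         \<union> shift_pg (subst_pg Mq (st_ren D)) \<gamma>) (st_mgu D)))))"

end

theory Submission
  imports Defs
begin


lemma prios_subst[simp]: "prios (subst_pg G s) = prios G"
  by (force simp: prios_def subst_pg_def)
lemma prios_shift[simp]: "prios (shift_pg G f) = f ` prios G"
  by (force simp: prios_def shift_pg_def)
lemma prios_Un[simp]: "prios (A \<union> B) = prios A \<union> prios B"
  by (simp add: prios_def image_Un)
lemma shift_shift: "shift_pg (shift_pg G f) g = shift_pg G (g \<circ> f)"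
  by (force simp: shift_pg_def image_iff)
lemma shift_cong: "(\<forall>x\<in>prios G. f x = g x) \<Longrightarrow> shift_pg G f = shift_pg G g"
  by (force simp: shift_pg_def prios_def image_iff)

lemma shifting_on: "shifting f \<Longrightarrow> strict_mono_on A f"
  by (auto simp: shifting_def strict_mono_def intro: strict_mono_onI)

lemma mono_agree_aux:
  fixes P :: "rat set" and f g :: "rat \<Rightarrow> rat"
  assumes mP: "m \<in> P" and lt: "f m < g m" and im: "f m \<in> g ` P"
    and bel: "\<forall>y\<in>P. y < m \<longrightarrow> f y = g y"
    and mf: "strict_mono_on P f" and mg: "strict_mono_on P g"
  shows False
proof -
  obtain y where y: "y \<in> P" "f m = g y" using im by blast
  have "y < m"
  proof (rule ccontr)
    assume "\<not> y < m"
    then have "y = m \<or> m < y" by auto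
    then show False
    proof
      assume "y = m" then show False using y lt by simp
    next
      assume "m < y" then have "g m < g y" using strict_mono_onD[OF mg mP y(1)] by blast
      then show False using y lt by simp
    qed
  qed
  then have "f y < f m" using strict_mono_onD[OF mf y(1) mP] by blast
  moreover have "f y = g y" using bel y(1) \<open>y < m\<close> by blast
  ultimately show False using y by simp
qed

lemma mono_agree:
  fixes P :: "rat set" and f g :: "rat \<Rightarrow> rat"
  assumes fin: "finite P" and mf: "strict_mono_on P f" and mg: "strict_mono_on P g"
    and im: "f ` P = g ` P" and xP: "x \<in> P"
  shows "f x = g x"
proof (rule ccontr)
  assume nx: "f x \<noteq> g x"
  define Q where "Q = {x\<in>P. f x \<noteq> g x}"
  have Qf: "finite Q" using fin by (simp add: Q_def)
  have Qne: "Q \<noteq> {}" using xP nx by (auto simp: Q_def)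
  define m where "m = Min Q"
  have mQ: "m \<in> Q" using Qf Qne by (simp add: m_def)
  have mP: "m \<in> P" and mne: "f m \<noteq> g m" using mQ by (simp_all add: Q_def)
  have below: "\<forall>y\<in>P. y < m \<longrightarrow> f y = g y"
  proof (intro ballI impI)
    fix y assume yP: "y \<in> P" and ym: "y < m"
    show "f y = g y"
    proof (rule ccontr)
      assume "f y \<noteq> g y"
      then have "y \<in> Q" using yP by (simp add: Q_def)
      then have "m \<le> y" using Qf by (simp add: m_def)
      then show False using ym by simp
    qed
  qed
  have fmP: "f m \<in> g ` P" using im mP by blast
  have gmP: "g m \<in> f ` P" using im mP by blast
  have "f m < g m \<or> g m < f m" using mne by (simp add: neq_iff)
  then show False
  proof
    assume "f m < g m"
    then show False using mono_agree_aux[OF mP _ fmP below mf mg] by blast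
  next
    assume "g m < f m"
    moreover have "\<forall>y\<in>P. y < m \<longrightarrow> g y = f y" using below by simp
    ultimately show False using mono_agree_aux[OF mP _ gmP _ mg mf] by blast
  qed
qed


definition stretch :: "rat \<Rightarrow> rat \<Rightarrow> rat \<Rightarrow> rat \<Rightarrow> rat" where
  "stretch c u v x = (if x \<le> c then x else c + (x - c) * (v - c) / (u - c))"

lemma stretch_inv:
  assumes "c < u" "c < v" shows "stretch c v u (stretch c u v x) = x"
proof (cases "x \<le> c")
  case True then show ?thesis by (simp add: stretch_def)
next
  case False
  define y where "y = c + (x - c) * (v - c) / (u - c)"
  have pos: "0 < (x - c) * (v - c) / (u - c)" using False assms by simp
  have y1: "stretch c u v x = y" using False by (simp add: stretch_def y_def)
  have y2: "\<not> y \<le> c" using pos by (simp add: y_def)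
  have "(y - c) * (u - c) / (v - c) = x - c" using assms by (simp add: y_def)
  then show ?thesis using y1 y2 by (simp add: stretch_def)
qed

lemma stretch_mono:
  assumes "c < u" "c < v" shows "strict_mono (stretch c u v)"
proof (rule strict_monoI)
  fix x y :: rat assume xy: "x < y"
  show "stretch c u v x < stretch c u v y"
  proof (cases "y \<le> c")
    case True then show ?thesis using xy by (simp add: stretch_def)
  next
    case False
    have p1: "0 < (y - c) * (v - c)" using False assms by simp
    have pos: "0 < (y - c) * (v - c) / (u - c)" using p1 assms by simp
    show ?thesis
    proof (cases "x \<le> c")
      case True then show ?thesis using False pos by (simp add: stretch_def)
    next
      case F2: False
      have "(x - c) * (v - c) < (y - c) * (v - c)" using xy assms by (simp add: mult_strict_right_mono)
      then have "(x - c) * (v - c) / (u - c) < (y - c) * (v - c) / (u - c)"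
        using assms by (simp add: divide_strict_right_mono)
      then show ?thesis using False F2 by (simp add: stretch_def)
    qed
  qed
qed

lemma stretch_val: "c < u \<Longrightarrow> stretch c u v u = v"
  by (simp add: stretch_def)

lemma stretch_fix: "x \<le> c \<Longrightarrow> stretch c u v x = x"
  by (simp add: stretch_def)

lemma stretch_shifting: assumes "c < u" "c < v" shows "shifting (stretch c u v)"
proof -
  have "bij (stretch c u v)"
    by (rule o_bij[where g = "stretch c v u"]) (auto simp: fun_eq_iff stretch_inv assms)
  then show ?thesis using stretch_mono[OF assms] by (simp add: shifting_def)
qed

lemma shifting_comp: "shifting f \<Longrightarrow> shifting g \<Longrightarrow> shifting (g \<circ> f)"
  unfolding shifting_def by (auto simp: strict_mono_def intro: bij_comp)

lemma shifting_transl: "shifting (\<lambda>x::rat. x + d)"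
proof -
  have "bij (\<lambda>x::rat. x + d)"
    by (rule o_bij[where g = "\<lambda>x. x - d"]) (auto simp: fun_eq_iff)
  then show ?thesis by (simp add: shifting_def strict_mono_def)
qed

lemma shifting_id: "shifting id"
  unfolding shifting_def by (auto simp: strict_mono_def)

lemma extend:
  "finite S \<Longrightarrow> \<forall>f. strict_mono_on S f \<longrightarrow> (\<exists>\<rho>. shifting \<rho> \<and> (\<forall>x\<in>S. \<rho> x = (f x::rat)))"
proof (induction S rule: finite_linorder_max_induct)
  case empty
  then show ?case using shifting_id by blast
next
  case (insert b A)
  show ?case
  proof (intro allI impI)
    fix f :: "rat \<Rightarrow> rat" assume fm: "strict_mono_on (insert b A) f"
    then have "strict_mono_on A f" by (auto intro: strict_mono_onI dest: strict_mono_onD)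
    then obtain \<rho>0 where r0: "shifting \<rho>0" "\<forall>x\<in>A. \<rho>0 x = f x" using insert.IH by blast
    show "\<exists>\<rho>. shifting \<rho> \<and> (\<forall>x\<in>insert b A. \<rho> x = f x)"
    proof (cases "A = {}")
      case True
      then show ?thesis using shifting_transl[of "f b - b"] by auto
    next
      case False
      define M where "M = Max A"
      have MA: "M \<in> A" "M < b" using False insert by (auto simp: M_def)
      define c where "c = f M"
      have c0: "\<rho>0 M = c" using r0 MA by (simp add: c_def)
      have u: "c < \<rho>0 b" using r0(1) MA c0 unfolding shifting_def by (metis strict_monoD)
      have v: "c < f b" using fm MA unfolding c_def by (auto dest: strict_mono_onD)
      have le: "\<forall>a\<in>A. f a \<le> c"
      proof
        fix a assume "a \<in> A"
        then have "a \<le> M" using insert(1) by (simp add: M_def)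
        then have "a = M \<or> a < M" by auto
        then show "f a \<le> c" using fm \<open>a \<in> A\<close> MA unfolding c_def
          by (auto dest: strict_mono_onD intro: less_imp_le)
      qed
      let ?r = "stretch c (\<rho>0 b) (f b) \<circ> \<rho>0"
      have "shifting ?r" using shifting_comp[OF r0(1) stretch_shifting[OF u v]] .
      moreover have "\<forall>x\<in>insert b A. ?r x = f x"
        using r0(2) le u by (auto simp: stretch_val stretch_fix)
      ultimately show ?thesis by blast
    qed
  qed
qed



lemma before_pw: "before A B \<Longrightarrow> p \<in> prios A \<Longrightarrow> q \<in> prios B \<Longrightarrow> p < q"
  by (auto simp: before_def)

lemma main_lemma:
  assumes st1: "is_step D1" and st2: "is_step D2" and D1: "D1 \<in> SQ" and D2: "D2 \<in> SQ"
    and sq: "stack_queue_type SQ" and low: "lowering D1 D2 X"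
  shows "cong_lowering D1 D2 X"
proof -
  obtain a K lam \<sigma> where W: "lowering_wit D1 D2 X a K lam \<sigma>"
    using low unfolding lowering_def by blast
  let ?c = "st_clause D1"
  let ?B = "snd (st_clause D1)"
  let ?K' = "shift_pg (subst_pg K lam) \<sigma>"
  let ?a' = "(subst_atom (fst a) lam, \<sigma> (snd a))"
  let ?B1 = "shift_pg (subst_pg ?B (st_ren D1)) (st_shift D1)"
  let ?B2 = "shift_pg (subst_pg ?B (st_ren D2)) (st_shift D2)"
  have c2: "st_clause D2 = ?c" and s\<sigma>: "shifting \<sigma>" and g1: "st_goal D1 = insert a K"
    and ba: "before {a} K" and ba': "before {?a'} (?K' \<union> X)"
    and g2: "st_goal D2 = insert ?a' (?K' \<union> X)"
    and nK: "no_common K ?B1" and r1: "st_res D1 = subst_pg (K \<union> ?B1) (st_mgu D1)"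
    and nX: "no_common (X \<union> ?K') ?B2" and r2: "st_res D2 = subst_pg (X \<union> ?K' \<union> ?B2) (st_mgu D2)"
    using W unfolding lowering_wit_def Let_def by simp_all
  have pB: "pgoal ?B" using st1 unfolding is_step_def by blast
  have sh1: "shifting (st_shift D1)" and sh2: "shifting (st_shift D2)"
    using st1 st2 unfolding is_step_def by auto
  have exM: "\<exists>Ms Mq. pgoal Ms \<and> pgoal Mq \<and> before Ms Mq \<and> ?B = Ms \<union> Mq
          \<and> (\<forall>D\<in>SQ. \<forall>a K. st_clause D = ?c \<and> st_goal D = insert a K \<and> before {a} K \<longrightarrow>
               (\<exists>\<gamma>. shifting \<gamma>
                  \<and> before (shift_pg (subst_pg Ms (st_ren D)) \<gamma>) K
                  \<and> before K (shift_pg (subst_pg Mq (st_ren D)) \<gamma>)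
                  \<and> before (shift_pg (subst_pg Ms (st_ren D)) \<gamma>) (shift_pg (subst_pg Mq (st_ren D)) \<gamma>)
                  \<and> st_res D = subst_pg (shift_pg (subst_pg Ms (st_ren D)) \<gamma> \<union> K
                                         \<union> shift_pg (subst_pg Mq (st_ren D)) \<gamma>) (st_mgu D)))"
    using mp[OF spec[OF sq[unfolded stack_queue_type_def], of ?c] pB] .
  obtain Ms Mq where pMs: "pgoal Ms" and pMq: "pgoal Mq" and bMM: "before Ms Mq"
    and BM: "?B = Ms \<union> Mq"
    and H: "\<forall>D\<in>SQ. \<forall>a K. st_clause D = ?c \<and> st_goal D = insert a K \<and> before {a} K \<longrightarrow>
               (\<exists>\<gamma>. shifting \<gamma>
                  \<and> before (shift_pg (subst_pg Ms (st_ren D)) \<gamma>) K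
                  \<and> before K (shift_pg (subst_pg Mq (st_ren D)) \<gamma>)
                  \<and> before (shift_pg (subst_pg Ms (st_ren D)) \<gamma>) (shift_pg (subst_pg Mq (st_ren D)) \<gamma>)
                  \<and> st_res D = subst_pg (shift_pg (subst_pg Ms (st_ren D)) \<gamma> \<union> K
                                         \<union> shift_pg (subst_pg Mq (st_ren D)) \<gamma>) (st_mgu D))"
    using exM by (elim exE conjE) (rule that)
  obtain \<gamma>1 where G1: "shifting \<gamma>1"
                  "before (shift_pg (subst_pg Ms (st_ren D1)) \<gamma>1) K"
                  "before K (shift_pg (subst_pg Mq (st_ren D1)) \<gamma>1)"
                  "before (shift_pg (subst_pg Ms (st_ren D1)) \<gamma>1) (shift_pg (subst_pg Mq (st_ren D1)) \<gamma>1)"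
                  "st_res D1 = subst_pg (shift_pg (subst_pg Ms (st_ren D1)) \<gamma>1 \<union> K
                                         \<union> shift_pg (subst_pg Mq (st_ren D1)) \<gamma>1) (st_mgu D1)"
    using H[rule_format, OF D1 conjI[OF refl conjI[OF g1 ba]]] by (elim exE conjE) (rule that)
  obtain \<gamma>2 where G2: "shifting \<gamma>2"
                  "before (shift_pg (subst_pg Ms (st_ren D2)) \<gamma>2) (?K' \<union> X)"
                  "before (?K' \<union> X) (shift_pg (subst_pg Mq (st_ren D2)) \<gamma>2)"
                  "before (shift_pg (subst_pg Ms (st_ren D2)) \<gamma>2) (shift_pg (subst_pg Mq (st_ren D2)) \<gamma>2)"
                  "st_res D2 = subst_pg (shift_pg (subst_pg Ms (st_ren D2)) \<gamma>2 \<union> (?K' \<union> X)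
                                         \<union> shift_pg (subst_pg Mq (st_ren D2)) \<gamma>2) (st_mgu D2)"
    using H[rule_format, OF D2 conjI[OF c2 conjI[OF g2 ba']]] by (elim exE conjE) (rule that)
  define P where "P = prios ?B"
  define Ps where "Ps = prios Ms"
  define Pq where "Pq = prios Mq"
  have PU: "P = Ps \<union> Pq" using BM by (simp add: P_def Ps_def Pq_def)
  have finP: "finite P" using pB by (simp add: P_def prios_def pgoal_def)
  have b1s: "\<And>p k. p \<in> Ps \<Longrightarrow> k \<in> prios K \<Longrightarrow> \<gamma>1 p < k"
    using before_pw[OF G1(2)] by (simp add: Ps_def)
  have b1q: "\<And>p k. p \<in> Pq \<Longrightarrow> k \<in> prios K \<Longrightarrow> k < \<gamma>1 p"
    using before_pw[OF G1(3)] by (simp add: Pq_def)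
  have b2s: "\<And>p k. p \<in> Ps \<Longrightarrow> k \<in> \<sigma> ` prios K \<union> prios X \<Longrightarrow> \<gamma>2 p < k"
    using before_pw[OF G2(2)] by (simp add: Ps_def)
  have b2q: "\<And>p k. p \<in> Pq \<Longrightarrow> k \<in> \<sigma> ` prios K \<union> prios X \<Longrightarrow> k < \<gamma>2 p"
    using before_pw[OF G2(3)] by (simp add: Pq_def)
  have e1: "prios K \<union> st_shift D1 ` P = \<gamma>1 ` P \<union> prios K"
    using arg_cong[OF trans[OF r1[symmetric] G1(5)], of prios] PU
    by (simp add: P_def Ps_def Pq_def image_Un) blast
  have d1: "prios K \<inter> st_shift D1 ` P = {}" using nK by (simp add: no_common_def P_def)
  have d1': "\<gamma>1 ` P \<inter> prios K = {}" using b1s b1q PU by fastforce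
  have eq1: "st_shift D1 ` P = \<gamma>1 ` P" using e1 d1 d1' by blast
  have e2: "prios X \<union> \<sigma> ` prios K \<union> st_shift D2 ` P = \<gamma>2 ` P \<union> (\<sigma> ` prios K \<union> prios X)"
    using arg_cong[OF trans[OF r2[symmetric] G2(5)], of prios] PU
    by (simp add: P_def Ps_def Pq_def image_Un) blast
  have d2: "(prios X \<union> \<sigma> ` prios K) \<inter> st_shift D2 ` P = {}" using nX by (simp add: no_common_def P_def)
  have d2': "\<gamma>2 ` P \<inter> (\<sigma> ` prios K \<union> prios X) = {}" using b2s b2q PU by fastforce
  have eq2: "st_shift D2 ` P = \<gamma>2 ` P" using e2 d2 d2' by blast
  have a1: "\<And>p. p \<in> P \<Longrightarrow> st_shift D1 p = \<gamma>1 p"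
    by (rule mono_agree[OF finP shifting_on[OF sh1] shifting_on[OF G1(1)] eq1])
  have a2: "\<And>p. p \<in> P \<Longrightarrow> st_shift D2 p = \<gamma>2 p"
    by (rule mono_agree[OF finP shifting_on[OF sh2] shifting_on[OF G2(1)] eq2])
  have pK: "pgoal K" using W unfolding lowering_wit_def Let_def by simp
  have finK: "finite (prios K)" using pK by (simp add: prios_def pgoal_def)
  have inj1: "inj \<gamma>1" using G1(1) by (simp add: shifting_def bij_is_inj)
  have sm1: "strict_mono \<gamma>1" and sm2: "strict_mono \<gamma>2" and sms: "strict_mono \<sigma>"
    using G1(1) G2(1) s\<sigma> by (simp_all add: shifting_def)
  define S where "S = prios K \<union> \<gamma>1 ` P"
  define h where "h = (\<lambda>x. if x \<in> prios K then \<sigma> x else \<gamma>2 (inv \<gamma>1 x))"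
  have finS: "finite S" using finK finP by (simp add: S_def)
  have hK: "\<And>x. x \<in> prios K \<Longrightarrow> h x = \<sigma> x" by (simp add: h_def)
  have hP: "\<And>p. p \<in> P \<Longrightarrow> h (\<gamma>1 p) = \<gamma>2 p"
  proof -
    fix p assume pP: "p \<in> P"
    have "\<gamma>1 p \<notin> prios K" using d1' pP by blast
    then show "h (\<gamma>1 p) = \<gamma>2 p" using inj1 by (simp add: h_def)
  qed
  have hmono: "strict_mono_on S h"
  proof (rule strict_mono_onI)
    fix x y assume xS: "x \<in> S" and yS: "y \<in> S" and xy: "x < y"
    show "h x < h y"
    proof (cases "x \<in> prios K")
      case xK: True
      show ?thesis
      proof (cases "y \<in> prios K")
        case True then show ?thesis using xK xy hK strict_monoD[OF sms xy] by simp
      next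
        case False
        then obtain q where qP: "q \<in> P" and yq: "y = \<gamma>1 q" using yS by (auto simp: S_def)
        have "q \<notin> Ps"
        proof
          assume "q \<in> Ps" then have "\<gamma>1 q < x" using b1s xK by blast
          then show False using xy yq by simp
        qed
        then have qq: "q \<in> Pq" using qP PU by blast
        have "\<sigma> x < \<gamma>2 q" using b2q[OF qq] xK by blast
        then show ?thesis using hK[OF xK] hP[OF qP] yq by simp
      qed
    next
      case xK: False
      then obtain p where pP: "p \<in> P" and xp: "x = \<gamma>1 p" using xS by (auto simp: S_def)
      show ?thesis
      proof (cases "y \<in> prios K")
        case yK: True
        have "p \<notin> Pq"
        proof
          assume "p \<in> Pq" then have "y < \<gamma>1 p" using b1q yK by blast
          then show False using xy xp by simp
        qed
        then have pp: "p \<in> Ps" using pP PU by blast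
        have "\<gamma>2 p < \<sigma> y" using b2s[OF pp] yK by blast
        then show ?thesis using hK[OF yK] hP[OF pP] xp by simp
      next
        case False
        then obtain q where qP: "q \<in> P" and yq: "y = \<gamma>1 q" using yS by (auto simp: S_def)
        have "p < q" using xy xp yq strict_mono_less[OF sm1] by simp
        then have "\<gamma>2 p < \<gamma>2 q" using strict_monoD[OF sm2] by blast
        then show ?thesis using hP[OF pP] hP[OF qP] xp yq by simp
      qed
    qed
  qed
  obtain \<rho> where r: "shifting \<rho>" and rS: "\<forall>x\<in>S. \<rho> x = h x"
    using extend[OF finS] hmono by blast
  have c1: "shift_pg K \<rho> = shift_pg K \<sigma>"
    by (rule shift_cong) (use rS hK in \<open>simp add: S_def\<close>)
  have c3: "shift_pg (shift_pg ?B (st_shift D1)) \<rho> = shift_pg ?B (st_shift D2)"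
    unfolding shift_shift
  proof (rule shift_cong, intro ballI)
    fix p assume pP0: "p \<in> prios ?B"
    then have pP: "p \<in> P" by (simp add: P_def)
    have "\<gamma>1 p \<in> S" using pP by (simp add: S_def)
    then show "(\<rho> \<circ> st_shift D1) p = st_shift D2 p"
      using rS hP[OF pP] a1[OF pP] a2[OF pP] by simp
  qed
  show ?thesis unfolding cong_lowering_def using W r c1 c3 by blast
qed

theorem mainTheorem10:
  fixes SQ :: "('p, 'f, 'v) pstep set"
  assumes steps: "\<forall>D\<in>SQ. is_step D"
    and sq: "stack_queue_type SQ"
  shows "(\<forall>D1\<in>SQ. \<forall>D2\<in>SQ. \<forall>X. lowering D1 D2 X \<longrightarrow> cong_lowering D1 D2 X)
         \<and> spec_independent SQ
         \<and> (complete SQ \<longrightarrow> spec_indep_scheduling_rule SQ)"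
proof -
  have A: "\<forall>D1\<in>SQ. \<forall>D2\<in>SQ. \<forall>X. lowering D1 D2 X \<longrightarrow> cong_lowering D1 D2 X"
    using main_lemma steps sq by blast
  then have B: "spec_independent SQ" by (simp add: spec_independent_def)
  then show ?thesis using A by (simp add: spec_indep_scheduling_rule_def)
qed

end
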